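(* Let $s(\cdot)\in\mathcal{P}(\mathbb{R})$ with $s(x)=s_0>2$ for all $x\in[4,5]$. Then the kernel $\tilde K(x,y)=K_1(y)K_2(x-y-1)$ does not belong to $H_{s(\cdot),2}$; in particular $\tilde K\notin H_{s(\cdot)}$.
   Context: Here $n=1$. Fix $\beta>0$; $K_1(t)=\chi_{[2,3]}(t)$ and $K_2(t)=t^{-1/2}\big[\log(e/t)\big]^{-\frac{1+\beta}{2}}\chi_{(0,1)}(t)$. Cubes are intervals $Q$; $mQ$ is the concentric interval of length $m\ell(Q)$. $\mathcal{P}(\mathbb{R})$: measurable $p(\cdot):\mathbb{R}\to[1,\infty]$; $\|f\|_{p(\cdot)}=\inf\{\lambda>0:\int_{\{p<\infty\}}|f/\lambda|^{p(x)}dx+\|(f/\lambda)\chi_{\{p=\infty\}}\|_\infty\le1\}$. $K\in H_{s(\cdot),2}$ means $\sup_Q\sup_{x,z\in\frac12Q}\sum_{m\ge1}2^m\ell(Q)\frac{\|[K(\cdot,x)-K(\cdot,z)]\chi_{2^mQ\setminus2^{m-1}Q}\|_{s(\cdot)}}{\|\chi_{2^mQ}\|_{s(\cdot)}}<\infty$; $H_{s(\cdot)}=H_{s(\cdot),1}\cap H_{s(\cdot),2}$, where $H_{s(\cdot),1}$ is the same condition with $K(x,\cdot)-K(z,\cdot)$. *)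

theory Defs
  imports "HOL-Analysis.Analysis" "HOL-Probability.Essential_Supremum"
begin

definition var_exp :: "(real \<Rightarrow> ereal) \<Rightarrow> bool" where
  "var_exp p \<longleftrightarrow> p \<in> borel_measurable borel \<and> (\<forall>x. 1 \<le> p x)"

definition var_modular :: "(real \<Rightarrow> ereal) \<Rightarrow> (real \<Rightarrow> real) \<Rightarrow> ennreal" where
  "var_modular p f =
     (\<integral>\<^sup>+ x. indicator {y. p y < \<infinity>} x * ennreal (\<bar>f x\<bar> powr real_of_ereal (p x)) \<partial>lborel)
     + esssup lborel (\<lambda>x. ennreal \<bar>f x\<bar> * indicator {y. p y = \<infinity>} x)"

text \<open>Luxemburg norm (value top if no admissible lambda).\<close>
definition var_norm :: "(real \<Rightarrow> ereal) \<Rightarrow> (real \<Rightarrow> real) \<Rightarrow> ennreal" where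
  "var_norm p f = Inf {ennreal r | r. r > 0 \<and> var_modular p (\<lambda>x. f x / r) \<le> 1}"

definition K1 :: "real \<Rightarrow> real" where
  "K1 t = indicator {2..3} t"

definition K2 :: "real \<Rightarrow> real \<Rightarrow> real" where
  "K2 \<beta> t = (if 0 < t \<and> t < 1
      then t powr (-1/2) * (ln (exp 1 / t)) powr (- (1 + \<beta>) / 2) else 0)"

definition Ktilde :: "real \<Rightarrow> real \<Rightarrow> real \<Rightarrow> real" where
  "Ktilde \<beta> x y = K1 y * K2 \<beta> (x - y - 1)"

text \<open>Interval Q with centre c and length l is cball c (l/2); mQ = cball c (m*l/2).
  The parameter index set: c, l > 0, x, z in (1/2)Q.\<close>
definition H_params :: "(real \<times> real \<times> real \<times> real) set" where
  "H_params = {(c, l, x, z). l > 0 \<and> x \<in> cball c (l/4) \<and> z \<in> cball c (l/4)}"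

definition H_sum :: "(real \<Rightarrow> ereal) \<Rightarrow> (real \<Rightarrow> real) \<Rightarrow> real \<Rightarrow> real \<Rightarrow> ennreal" where
  "H_sum s g c l =
     (\<Sum>m. let k = Suc m in
        ennreal (2 ^ k * l)
        * var_norm s (\<lambda>t. g t * indicator (cball c (2 ^ k * l / 2) - cball c (2 ^ (k - 1) * l / 2)) t)
        / var_norm s (indicator (cball c (2 ^ k * l / 2))))"

definition H_s2 :: "(real \<Rightarrow> ereal) \<Rightarrow> (real \<Rightarrow> real \<Rightarrow> real) \<Rightarrow> bool" where
  "H_s2 s K \<longleftrightarrow>
     (SUP (c, l, x, z) \<in> H_params. H_sum s (\<lambda>t. K t x - K t z) c l) < top"

definition H_s1 :: "(real \<Rightarrow> ereal) \<Rightarrow> (real \<Rightarrow> real \<Rightarrow> real) \<Rightarrow> bool" where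
  "H_s1 s K \<longleftrightarrow>
     (SUP (c, l, x, z) \<in> H_params. H_sum s (\<lambda>t. K x t - K z t) c l) < top"

definition H_s :: "(real \<Rightarrow> ereal) \<Rightarrow> (real \<Rightarrow> real \<Rightarrow> real) \<Rightarrow> bool" where
  "H_s s K \<longleftrightarrow> H_s1 s K \<and> H_s2 s K"

end

theory Submission
  imports Defs "HOL-Real_Asymp.Real_Asymp"
begin

lemma asym_ev:
  fixes a q C :: real assumes "q > 0"
  shows "eventually (\<lambda>t. C * (ln (exp 1 / t)) powr a \<le> t powr (-q)) (at_right 0)"
  using assms by real_asymp

lemma conv_pt:
  fixes \<beta> s0 r t :: real
  assumes t: "0 < t" "t < 1" and r: "r > 0" and s0: "s0 > 0"
    and h: "r powr s0 * (ln (exp 1 / t)) powr ((1 + \<beta>) / 2 * s0) \<le> t powr (-(s0/2 - 1))"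
  shows "1 / t \<le> (K2 \<beta> t / r) powr s0"
proof -
  define L where "L = ln (exp 1 / t)"
  have l1: "ln (exp 1 / t) = 1 - ln t" using t by (simp add: ln_div)
  have l2: "ln t < 0" using t by simp
  have L: "L > 0" unfolding L_def using l1 l2 by linarith
  have K: "K2 \<beta> t = t powr (-1/2) * L powr (- (1 + \<beta>) / 2)"
    using t unfolding K2_def L_def by simp
  have "t powr (-(s0/2 - 1)) * t powr (-1) = t powr (-(s0/2 - 1) + -1)"
    by (rule powr_add[symmetric])
  also have "\<dots> = t powr (-1/2 * s0)"
    by (rule arg_cong[where f="\<lambda>e. t powr e"]) simp
  also have "\<dots> = (t powr (-1/2)) powr s0"
    by (rule powr_powr[symmetric])
  finally have A: "(t powr (-1/2)) powr s0 = t powr (-(s0/2 - 1)) * t powr (-1)"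
    by (rule sym)
  have "(L powr (- (1 + \<beta>) / 2)) powr s0 = L powr (- (1 + \<beta>) / 2 * s0)"
    by (rule powr_powr)
  also have "\<dots> = L powr (-((1 + \<beta>) / 2 * s0))"
    by (rule arg_cong[where f="\<lambda>e. L powr e"]) (simp add: algebra_simps)
  also have "\<dots> = 1 / L powr ((1 + \<beta>) / 2 * s0)"
    by (simp only: powr_minus inverse_eq_divide)
  finally have B: "(L powr (- (1 + \<beta>) / 2)) powr s0 = 1 / L powr ((1 + \<beta>) / 2 * s0)" .
  have fe: "\<And>x b c::real. x * (1/b) / c = x / (c*b)" by simp
  have "(K2 \<beta> t / r) powr s0 = (t powr (-1/2)) powr s0 * (L powr (- (1 + \<beta>) / 2)) powr s0 / r powr s0"
    unfolding K powr_divide powr_mult by (rule refl)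
  also have "\<dots> = t powr (-(s0/2 - 1)) * t powr (-1) / (r powr s0 * L powr ((1 + \<beta>) / 2 * s0))"
    unfolding A B fe by (rule refl)
  finally have eq: "(K2 \<beta> t / r) powr s0 = t powr (-(s0/2 - 1)) * t powr (-1) / (r powr s0 * L powr ((1 + \<beta>) / 2 * s0))" .
  have pos: "r powr s0 * L powr ((1 + \<beta>) / 2 * s0) > 0" using r L by simp
  have "1 / t = (r powr s0 * L powr ((1 + \<beta>) / 2 * s0)) * t powr (-1) / (r powr s0 * L powr ((1 + \<beta>) / 2 * s0))"
    using pos t L r by (simp add: powr_minus field_simps)
  also have "\<dots> \<le> t powr (-(s0/2 - 1)) * t powr (-1) / (r powr s0 * L powr ((1 + \<beta>) / 2 * s0))"
    using h pos t unfolding L_def[symmetric]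
    by (intro divide_right_mono mult_right_mono) auto
  finally show ?thesis using eq by simp
qed

lemma K2_nonneg: "0 \<le> K2 \<beta> t"
  unfolding K2_def by simp

lemma delta_ex:
  fixes \<beta> s0 r :: real
  assumes r: "r > 0" and s0: "s0 > 2"
  shows "\<exists>\<delta>>0. \<delta> < 1 \<and> (\<forall>t. 0 < t \<and> t \<le> \<delta> \<longrightarrow> 1 / t \<le> (K2 \<beta> t / r) powr s0)"
proof -
  have "eventually (\<lambda>t. r powr s0 * (ln (exp 1 / t)) powr ((1 + \<beta>) / 2 * s0) \<le> t powr (-(s0/2 - 1))) (at_right 0)"
    by (rule asym_ev) (use s0 in simp)
  then obtain b where b: "b > 0" and bP: "\<forall>y>0. y < b \<longrightarrow> r powr s0 * (ln (exp 1 / y)) powr ((1 + \<beta>) / 2 * s0) \<le> y powr (-(s0/2 - 1))"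
    unfolding eventually_at_right_field by auto
  define \<delta> where "\<delta> = min (b/2) (1/2)"
  have "\<delta> > 0" "\<delta> < 1" using b by (auto simp: \<delta>_def)
  moreover have "\<forall>t. 0 < t \<and> t \<le> \<delta> \<longrightarrow> 1 / t \<le> (K2 \<beta> t / r) powr s0"
  proof (intro allI impI)
    fix t assume t: "0 < t \<and> t \<le> \<delta>"
    then have "t < b" "t < 1" using b by (auto simp: \<delta>_def)
    then show "1 / t \<le> (K2 \<beta> t / r) powr s0"
      using t bP r s0 by (intro conv_pt) auto
  qed
  ultimately show ?thesis by blast
qed

lemma log_int:
  fixes a d :: real
  assumes "0 < a" "a < d"
  shows "(\<integral>\<^sup>+ t. ennreal (1 / (t - 4)) * indicator {4+a..4+d} t \<partial>lborel) = ennreal (ln d - ln a)"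
proof -
  have "((\<lambda>t. 1 / (t - 4)) has_integral (ln ((4+d) - 4) - ln ((4+a) - 4))) {4+a..4+d}"
  proof (rule fundamental_theorem_of_calculus)
    show "4 + a \<le> 4 + d" using assms by simp
    fix x assume x: "x \<in> {4+a..4+d}"
    then have "x > 4" using assms by auto
    then have "((\<lambda>t. ln (t - 4)) has_real_derivative 1 / (x - 4)) (at x)"
      by (auto intro!: derivative_eq_intros)
    then show "((\<lambda>t. ln (t - 4)) has_vector_derivative 1 / (x - 4)) (at x within {4+a..4+d})"
      using has_real_derivative_iff_has_vector_derivative has_vector_derivative_at_within by blast
  qed
  then have HI: "((\<lambda>t. 1 / (t - 4)) has_integral (ln d - ln a)) {4+a..4+d}" by simp
  show ?thesis
    using nn_integral_has_integral_lebesgue'[OF _ HI] assms by auto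
qed

lemma modular_top:
  fixes \<beta> s0 r :: real and s :: "real \<Rightarrow> ereal" and h :: "real \<Rightarrow> real"
  assumes r: "r > 0" and s0: "s0 > 2"
    and sv: "\<And>x. x \<in> {4..5} \<Longrightarrow> s x = ereal s0"
    and hv: "\<And>t. 4 < t \<Longrightarrow> t < 5 \<Longrightarrow> h t = K2 \<beta> (t - 4)"
  shows "var_modular s (\<lambda>t. h t / r) = top"
proof -
  obtain \<delta> where d: "\<delta> > 0" "\<delta> < 1" and dP: "\<forall>t. 0 < t \<and> t \<le> \<delta> \<longrightarrow> 1 / t \<le> (K2 \<beta> t / r) powr s0"
    using delta_ex[OF r s0] by blast
  have bound: "ennreal (ln \<delta> - ln a) \<le> var_modular s (\<lambda>t. h t / r)" if a: "0 < a" "a < \<delta>" for a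
  proof -
    have "ennreal (ln \<delta> - ln a) = (\<integral>\<^sup>+ t. ennreal (1 / (t - 4)) * indicator {4+a..4+\<delta>} t \<partial>lborel)"
      using log_int[OF a] by simp
    also have "\<dots> \<le> (\<integral>\<^sup>+ x. indicator {y. s y < \<infinity>} x * ennreal (\<bar>h x / r\<bar> powr real_of_ereal (s x)) \<partial>lborel)"
    proof (rule nn_integral_mono)
      fix t
      show "ennreal (1 / (t - 4)) * indicator {4+a..4+\<delta>} t \<le> indicator {y. s y < \<infinity>} t * ennreal (\<bar>h t / r\<bar> powr real_of_ereal (s t))"
      proof (cases "t \<in> {4+a..4+\<delta>}")
        case True
        then have t: "4 < t" "t < 5" "t - 4 \<le> \<delta>" using a d by auto
        then have st: "s t = ereal s0" using sv by auto
        have "\<bar>h t / r\<bar> = K2 \<beta> (t - 4) / r" using hv[OF t(1,2)] K2_nonneg[of \<beta> "t-4"] r by simp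
        moreover have "1 / (t - 4) \<le> (K2 \<beta> (t - 4) / r) powr s0" using dP t by auto
        ultimately show ?thesis using True st by (auto intro: ennreal_leI)
      qed simp
    qed
    also have "\<dots> \<le> var_modular s (\<lambda>t. h t / r)"
      unfolding var_modular_def by (rule add_increasing2) auto
    finally show ?thesis .
  qed
  show ?thesis
  proof (rule ccontr)
    assume "var_modular s (\<lambda>t. h t / r) \<noteq> top"
    then obtain x where x: "var_modular s (\<lambda>t. h t / r) = ennreal x" "x \<ge> 0"
      by (cases "var_modular s (\<lambda>t. h t / r)") auto
    define a where "a = \<delta> * exp (-(x+1))"
    have a: "0 < a" "a < \<delta>" using d x(2) by (auto simp: a_def)
    have "ln \<delta> - ln a = x + 1" using d by (simp add: a_def ln_mult)
    then have "ennreal (x + 1) \<le> ennreal x" using bound[OF a] x(1) by simp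
    then show False using x(2) by (simp add: ennreal_le_iff)
  qed
qed

lemma norm_top:
  assumes "\<And>r. r > 0 \<Longrightarrow> var_modular s (\<lambda>t. h t / r) = top"
  shows "var_norm s h = top"
proof -
  have nle: "\<not> (var_modular s (\<lambda>x. h x / r) \<le> 1)" if "r > 0" for r
    using assms[OF that] by (simp add: top_unique)
  have E: "{ennreal r | r. r > 0 \<and> var_modular s (\<lambda>x. h x / r) \<le> 1} = {}"
    using nle by blast
  show ?thesis unfolding var_norm_def E by simp
qed

lemma den_fin:
  assumes "var_exp s"
  shows "var_norm s (indicator (cball (3::real) 2)) \<noteq> top"
proof -
  have sm: "s \<in> borel_measurable lborel" using assms unfolding var_exp_def by simp
  have s1: "\<And>x. 1 \<le> s x" using assms unfolding var_exp_def by simp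
  let ?f = "\<lambda>x::real. indicator (cball (3::real) 2) x / (5::real)"
  have I: "(\<integral>\<^sup>+ x. indicator {y. s y < \<infinity>} x * ennreal (\<bar>?f x\<bar> powr real_of_ereal (s x)) \<partial>lborel)
      \<le> (\<integral>\<^sup>+ x. ennreal (1/5) * indicator {1..5::real} x \<partial>lborel)"
  proof (rule nn_integral_mono)
    fix x :: real
    show "indicator {y. s y < \<infinity>} x * ennreal (\<bar>?f x\<bar> powr real_of_ereal (s x)) \<le> ennreal (1/5) * indicator {1..5} x"
    proof (cases "x \<in> {1..5}")
      case True
      then have xin: "x \<in> cball 3 2" by (simp add: cball_eq_atLeastAtMost)
      show ?thesis
      proof (cases "s x < \<infinity>")
        case True
        have "1 \<le> real_of_ereal (s x)" using s1[of x] True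
          by (cases "s x") auto
        then have "(1/5::real) powr real_of_ereal (s x) \<le> 1/5" by (intro powr_le_one_le) auto
        then show ?thesis using True xin \<open>x \<in> {1..5}\<close> by (auto intro: ennreal_leI)
      qed (use \<open>x \<in> {1..5}\<close> in auto)
    next
      case False
      then have "x \<notin> cball 3 2" by (simp add: cball_eq_atLeastAtMost)
      then show ?thesis by simp
    qed
  qed
  also have "\<dots> = ennreal (1/5) * 4"
    by (subst nn_integral_cmult_indicator) auto
  finally have I4: "(\<integral>\<^sup>+ x. indicator {y. s y < \<infinity>} x * ennreal (\<bar>?f x\<bar> powr real_of_ereal (s x)) \<partial>lborel) \<le> ennreal (4/5)"
    using ennreal_mult[of "1/5" 4] by simp
  have meas: "(\<lambda>x. ennreal \<bar>?f x\<bar> * indicator {y. s y = \<infinity>} x) \<in> borel_measurable lborel"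
  proof -
    have "{y. s y = \<infinity>} \<in> sets lborel"
      using measurable_sets[OF sm, of "{\<infinity>}"] by (simp add: vimage_def)
    moreover have "cball (3::real) 2 \<in> sets borel" by simp
    ultimately have S: "{y. s y = \<infinity>} \<in> sets lborel" "cball (3::real) 2 \<in> sets lborel" by auto
    have m1: "(\<lambda>x. \<bar>?f x\<bar>) \<in> borel_measurable lborel"
      by (rule borel_measurable_abs[OF borel_measurable_divide[OF borel_measurable_indicator[OF S(2)] borel_measurable_const]])
    have m2: "(\<lambda>x. ennreal \<bar>?f x\<bar>) \<in> borel_measurable lborel"
      using measurable_compose[OF m1 measurable_ennreal] by simp
    have m3: "(indicator {y. s y = \<infinity>} :: real \<Rightarrow> ennreal) \<in> borel_measurable lborel"
      using S(1) by (rule borel_measurable_indicator)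
    show ?thesis using borel_measurable_times_ennreal[OF m2 m3] by simp
  qed
  have E: "esssup lborel (\<lambda>x. ennreal \<bar>?f x\<bar> * indicator {y. s y = \<infinity>} x) \<le> ennreal (1/5)"
  proof (rule esssup_I[OF meas])
    show "AE x in lborel. ennreal \<bar>?f x\<bar> * indicator {y. s y = \<infinity>} x \<le> ennreal (1/5)"
      by (intro AE_I2) (auto simp: indicator_def)
  qed
  have "var_modular s ?f \<le> ennreal (4/5) + ennreal (1/5)"
    unfolding var_modular_def using I4 E by (rule add_mono)
  also have "\<dots> = 1" by (simp flip: ennreal_plus)
  finally have M: "var_modular s ?f \<le> 1" .
  have "var_norm s (indicator (cball (3::real) 2)) \<le> ennreal 5"
    unfolding var_norm_def
    by (rule Inf_lower) (use M in \<open>auto intro!: exI[of _ "5::real"]\<close>)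
  then have "var_norm s (indicator (cball (3::real) 2)) < top"
    using ennreal_less_top by (rule le_less_trans)
  then show ?thesis by simp
qed

theorem mainTheorem20:
  fixes \<beta> s0 :: real and s :: "real \<Rightarrow> ereal"
  assumes "\<beta> > 0"
    and "var_exp s"
    and "s0 > 2"
    and "\<And>x. x \<in> {4..5} \<Longrightarrow> s x = ereal s0"
  shows "\<not> H_s2 s (Ktilde \<beta>) \<and> \<not> H_s s (Ktilde \<beta>)"
proof -
  let ?g = "\<lambda>t. Ktilde \<beta> t 3 - Ktilde \<beta> t 3.1"
  let ?h = "\<lambda>t. ?g t * indicator (cball (3::real) 2 - cball 3 1) t"
  have hv: "?h t = K2 \<beta> (t - 4)" if "4 < t" "t < 5" for t
  proof -
    have "t \<in> cball (3::real) 2 - cball 3 1" using that by (auto simp: dist_real_def)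
    moreover have "t - 3 - 1 = t - 4" by simp
    ultimately show ?thesis by (simp add: Ktilde_def K1_def)
  qed
  have num: "var_norm s ?h = top"
    by (rule norm_top, rule modular_top[OF _ assms(3) assms(4)]) (use hv in auto)
  have den: "var_norm s (indicator (cball (3::real) 2)) \<noteq> top"
    by (rule den_fin[OF assms(2)])
  define F where "F = (\<lambda>m. let k = Suc m in
        ennreal (2 ^ k * (1::real))
        * var_norm s (\<lambda>t. ?g t * indicator (cball 3 (2 ^ k * 1 / 2) - cball 3 (2 ^ (k - 1) * 1 / 2)) t)
        / var_norm s (indicator (cball 3 (2 ^ k * 1 / 2))))"
  have F1: "F 1 = top"
    unfolding F_def Let_def using num den by (simp add: ennreal_top_divide ennreal_mult_top)
  have "H_sum s ?g 3 1 = suminf F" unfolding H_sum_def F_def by simp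
  also have "F 1 \<le> suminf F"
  proof -
    have "F 1 \<le> sum F {..<2}" by (simp add: numeral_2_eq_2 add_increasing)
    also have "\<dots> \<le> suminf F" by (rule sum_le_suminf) auto
    finally show ?thesis .
  qed
  finally have "F 1 \<le> H_sum s ?g 3 1" by simp
  then have Htop: "H_sum s ?g 3 1 = top" using F1 top_unique by metis
  have mem: "(3, 1, 3, 3.1) \<in> H_params" unfolding H_params_def by (auto simp: dist_real_def)
  have "H_sum s ?g 3 1 \<le> (SUP (c, l, x, z) \<in> H_params. H_sum s (\<lambda>t. Ktilde \<beta> t x - Ktilde \<beta> t z) c l)"
    using mem by (rule SUP_upper2) simp
  then have "\<not> H_s2 s (Ktilde \<beta>)" unfolding H_s2_def using Htop top_unique by fastforce
  then show ?thesis unfolding H_s_def by simp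
qed

end
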